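(* Let $k$ be a field of characteristic $0$, $n\geq3$, let $\phi'$ be a regular quadratic form over $k$ in $n-2$ variables, $\phi=\langle1\rangle\perp(-\phi')$, and let $X\subset\mathbb A^n_k$ be the zero locus of $x_1x_2-\phi(1,x_3,\dots,x_n)$ (a model of $Q^\psi$ for $\psi=\langle1,-1\rangle\perp\phi'$). Suppose $\phi$ is anisotropic and let $f:\mathbb A^1_k\dashrightarrow X$ be a rational map, viewed also as an element of $X(k(t))$. Then the following are equivalent: (1) $f^*(x_1)\in c\,\langle D(\phi_{k(t)})\rangle$ for some $c\in k^*$; (2) for any $t_1\in k$ at which $f$ is defined, $[f]_1=[f(t_1)]_1$ in $\mathcal S(X)(k(t))$, i.e. the map ${\rm Spec}\,k(t)\xrightarrow{f}X$ is $\mathbb A^1$-chain homotopic to the constant map ${\rm Spec}\,k(t)\to X$ at the $k$-point $f(t_1)$. Moreover, if $\phi$ is isotropic, then (2) holds for every rational map $f:\mathbb A^1_k\dashrightarrow X$.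
   Context: $k(t)$ is the function field of $\mathbb A^1_k$; $D(\phi_{k(t)})$ is the set of nonzero values in $k(t)$ represented by $\phi$ and $\langle D(\phi_{k(t)})\rangle$ the subgroup of $k(t)^*$ it generates. $Sm/k$ denotes smooth finite-type $k$-schemes with the Nisnevich topology; for a sheaf $\mathcal F$ and finitely generated separable $K/k$, $\mathcal F(K)$ is the colimit of $\mathcal F(U)$ over smooth $k$-schemes $U$ with function field $K$. Sections are $\mathbb A^1$-homotopic if some $h\in\mathcal F(\mathbb A^1_k\times U)$ has $h(0)=x_0,h(1)=x_1$; $\mathbb A^1$-chain homotopy is the generated equivalence relation; $\mathcal S(\mathcal F)$ is the Nisnevich sheafification of $U\mapsto\mathcal F(U)/(\mathbb A^1\text{-chain homotopy})$; $[x]_1$ denotes the image of $x$ in $\mathcal S(\mathcal F)$. *)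

theory Defs
  imports "HOL-Computational_Algebra.Computational_Algebra"
begin

text \<open>The quadratic form phi' in m = n-2 variables over k is given by a symmetric
  coefficient matrix a (indices < m): phi'(y) = sum_{i,j<m} a i j * y i * y j.
  The generic embedding emb maps coefficients from k into the ring R over which we evaluate.\<close>

definition qf_eval :: "('k \<Rightarrow> 'R::comm_ring_1) \<Rightarrow> (nat \<Rightarrow> nat \<Rightarrow> 'k) \<Rightarrow> nat \<Rightarrow> (nat \<Rightarrow> 'R) \<Rightarrow> 'R" where
  "qf_eval emb a m y = (\<Sum>i<m. \<Sum>j<m. emb (a i j) * y i * y j)"

definition symmetric_qf :: "(nat \<Rightarrow> nat \<Rightarrow> 'k) \<Rightarrow> nat \<Rightarrow> bool" where
  "symmetric_qf a m \<longleftrightarrow> (\<forall>i<m. \<forall>j<m. a i j = a j i)"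

definition regular_qf :: "(nat \<Rightarrow> nat \<Rightarrow> 'k::field) \<Rightarrow> nat \<Rightarrow> bool" where
  "regular_qf a m \<longleftrightarrow>
     (\<forall>v. (\<forall>w. (\<Sum>i<m. \<Sum>j<m. a i j * v i * w j) = 0) \<longrightarrow> (\<forall>i<m. v i = 0))"

text \<open>phi = <1> \<perp> (-phi') in m+1 variables: phi(v) = v 0 ^2 - phi'(v 1, ..., v m).\<close>
definition phi_eval :: "('k \<Rightarrow> 'R::comm_ring_1) \<Rightarrow> (nat \<Rightarrow> nat \<Rightarrow> 'k) \<Rightarrow> nat \<Rightarrow> (nat \<Rightarrow> 'R) \<Rightarrow> 'R" where
  "phi_eval emb a m v = v 0 * v 0 - qf_eval emb a m (\<lambda>i. v (Suc i))"

definition anisotropic_phi :: "(nat \<Rightarrow> nat \<Rightarrow> 'k::field) \<Rightarrow> nat \<Rightarrow> bool" where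
  "anisotropic_phi a m \<longleftrightarrow> (\<forall>v. phi_eval id a m v = 0 \<longrightarrow> (\<forall>i\<le>m. v i = 0))"

definition D_phi :: "('k \<Rightarrow> 'K::field) \<Rightarrow> (nat \<Rightarrow> nat \<Rightarrow> 'k) \<Rightarrow> nat \<Rightarrow> 'K set" where
  "D_phi emb a m = {c. c \<noteq> 0 \<and> (\<exists>v. c = phi_eval emb a m v)}"

inductive_set gen_subgroup :: "'K::field set \<Rightarrow> 'K set" for S where
  one: "1 \<in> gen_subgroup S"
| mult: "x \<in> gen_subgroup S \<Longrightarrow> d \<in> S \<Longrightarrow> x * d \<in> gen_subgroup S"
| mult_inv: "x \<in> gen_subgroup S \<Longrightarrow> d \<in> S \<Longrightarrow> x * inverse d \<in> gen_subgroup S"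

text \<open>R-points of X = {x1 x2 = phi(1,x3,...,xn)} \<subseteq> A^n, n = m+2.
  Coordinates: x 0 = x_1, x 1 = x_2, x (i+2) = x_(i+3); coordinates \<ge> m+2 are 0.\<close>
definition in_X :: "('k \<Rightarrow> 'R::comm_ring_1) \<Rightarrow> (nat \<Rightarrow> nat \<Rightarrow> 'k) \<Rightarrow> nat \<Rightarrow> (nat \<Rightarrow> 'R) \<Rightarrow> bool" where
  "in_X emb a m x \<longleftrightarrow>
     x 0 * x 1 = phi_eval emb a m (\<lambda>i. if i = 0 then 1 else x (Suc i)) \<and>
     (\<forall>i\<ge>m+2. x i = 0)"

definition emb_kt :: "'k::field \<Rightarrow> 'k poly fract" where
  "emb_kt c = Fract [:c:] 1"

definition emb_kts :: "'k::field \<Rightarrow> 'k poly fract poly" where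
  "emb_kts c = [:emb_kt c:]"

definition A1_homotopic :: "(nat \<Rightarrow> nat \<Rightarrow> 'k::field) \<Rightarrow> nat \<Rightarrow>
    (nat \<Rightarrow> 'k poly fract) \<Rightarrow> (nat \<Rightarrow> 'k poly fract) \<Rightarrow> bool" where
  "A1_homotopic a m x y \<longleftrightarrow>
     (\<exists>h. in_X emb_kts a m h \<and> (\<lambda>i. poly (h i) 0) = x \<and> (\<lambda>i. poly (h i) 1) = y)"

text \<open>A^1-chain homotopy: equivalence relation generated. Equality of the classes
  [x]_1 = [y]_1 in S(X)(k(t)).\<close>
definition A1_chain_homotopic :: "(nat \<Rightarrow> nat \<Rightarrow> 'k::field) \<Rightarrow> nat \<Rightarrow>
    (nat \<Rightarrow> 'k poly fract) \<Rightarrow> (nat \<Rightarrow> 'k poly fract) \<Rightarrow> bool" where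
  "A1_chain_homotopic a m = (\<lambda>x y. A1_homotopic a m x y \<or> A1_homotopic a m y x)\<^sup>*\<^sup>*"

definition rat_value_at :: "'k::field poly fract \<Rightarrow> 'k \<Rightarrow> 'k \<Rightarrow> bool" where
  "rat_value_at q t1 c \<longleftrightarrow>
     (\<exists>p r. poly r t1 \<noteq> 0 \<and> q = Fract p r \<and> c = poly p t1 / poly r t1)"

definition rat_map_value_at :: "(nat \<Rightarrow> 'k::field poly fract) \<Rightarrow> 'k \<Rightarrow> (nat \<Rightarrow> 'k) \<Rightarrow> bool" where
  "rat_map_value_at f t1 y \<longleftrightarrow> (\<forall>i. rat_value_at (f i) t1 (y i))"

definition cond2 :: "(nat \<Rightarrow> nat \<Rightarrow> 'k::field) \<Rightarrow> nat \<Rightarrow> (nat \<Rightarrow> 'k poly fract) \<Rightarrow> bool" where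
  "cond2 a m f \<longleftrightarrow>
     (\<forall>t1 y. rat_map_value_at f t1 y \<longrightarrow> A1_chain_homotopic a m f (\<lambda>i. emb_kt (y i)))"

end

theory Submission
  imports Defs
begin


definition bf :: "('k \<Rightarrow> 'R::comm_ring_1) \<Rightarrow> (nat \<Rightarrow> nat \<Rightarrow> 'k) \<Rightarrow> nat \<Rightarrow> (nat \<Rightarrow> 'R) \<Rightarrow> (nat \<Rightarrow> 'R) \<Rightarrow> 'R" where
  "bf e a m y u = (\<Sum>i<m. \<Sum>j<m. e (a i j) * y i * u j)"

lemma sum_hom:
  assumes "\<And>x y. h (x + y) = h x + h y" "h 0 = 0"
  shows "h (\<Sum>i\<in>A. g i) = (\<Sum>i\<in>A. h (g i))"
proof (cases "finite A")
  case True
  then show ?thesis by (induction A rule: finite_induct) (simp_all add: assms)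
qed (simp add: assms)

lemma qf_hom:
  assumes "\<And>x y. h (x + y) = h x + h y" "h 0 = 0" "\<And>x y. h (x * y) = h x * h y"
    "\<And>c. e' c = h (e c)"
  shows "qf_eval e' a m (\<lambda>i. h (v i)) = h (qf_eval e a m v)"
  unfolding qf_eval_def by (simp add: sum_hom[of h, OF assms(1,2)] assms(3,4))

lemma phi_hom:
  assumes "\<And>x y. h (x + y) = h x + h y" "h 0 = 0" "\<And>x y. h (x * y) = h x * h y"
    "\<And>x y. h (x - y) = h x - h y" "\<And>c. e' c = h (e c)"
  shows "phi_eval e' a m (\<lambda>i. h (v i)) = h (phi_eval e a m v)"
proof -
  have q: "qf_eval e' a m (\<lambda>i. h (v (Suc i))) = h (qf_eval e a m (\<lambda>i. v (Suc i)))"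
    by (rule qf_hom[OF assms(1,2,3,5)])
  show ?thesis unfolding phi_eval_def by (simp only: q assms(3,4))
qed

lemma qf_cong: "(\<And>i. i < m \<Longrightarrow> v i = w i) \<Longrightarrow> qf_eval e a m v = qf_eval e a m w"
  unfolding qf_eval_def by (intro sum.cong) auto

lemma phi_cong: "(\<And>i. i \<le> m \<Longrightarrow> v i = w i) \<Longrightarrow> phi_eval e a m v = phi_eval e a m w"
proof -
  assume h: "\<And>i. i \<le> m \<Longrightarrow> v i = w i"
  have "qf_eval e a m (\<lambda>i. v (Suc i)) = qf_eval e a m (\<lambda>i. w (Suc i))"
    by (rule qf_cong) (simp add: h)
  then show ?thesis unfolding phi_eval_def using h[of 0] by simp
qed

lemma qf_zero: "qf_eval e a m (\<lambda>i. 0) = 0"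
  unfolding qf_eval_def by simp

lemma qf_scale: "qf_eval e a m (\<lambda>i. c * v i) = c * c * qf_eval e a m v"
  unfolding qf_eval_def by (simp add: sum_distrib_left mult_ac)

lemma phi_scale: "phi_eval e a m (\<lambda>i. c * v i) = c * c * phi_eval e a m v"
  unfolding phi_eval_def using qf_scale[of e a m c "\<lambda>i. v (Suc i)"]
  by (simp add: algebra_simps)

lemma qf_expand:
  assumes "\<And>i j. i < m \<Longrightarrow> j < m \<Longrightarrow> e (a i j) = e (a j i)"
  shows "qf_eval e a m (\<lambda>i. y i + c * u i) =
    qf_eval e a m y + 2 * c * bf e a m y u + c * c * qf_eval e a m u"
proof -
  have sw: "(\<Sum>i<m. \<Sum>j<m. e (a i j) * u i * y j) = bf e a m y u"
    unfolding bf_def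
    apply (subst sum.swap)
    apply (rule sum.cong, simp)
    apply (rule sum.cong, simp)
    using assms by (simp add: mult_ac)
  have "qf_eval e a m (\<lambda>i. y i + c * u i) = (\<Sum>i<m. \<Sum>j<m. e (a i j) * y i * y j
      + c * (e (a i j) * y i * u j) + c * (e (a i j) * u i * y j) + c * c * (e (a i j) * u i * u j))"
    unfolding qf_eval_def by (rule sum.cong, simp, rule sum.cong, simp, simp add: algebra_simps)
  also have "\<dots> = qf_eval e a m y + c * bf e a m y u + c * (\<Sum>i<m. \<Sum>j<m. e (a i j) * u i * y j)
      + c * c * qf_eval e a m u"
    unfolding qf_eval_def bf_def by (simp add: sum.distrib sum_distrib_left)
  finally show ?thesis using sw by (simp add: algebra_simps)
qed



definition tf :: "'a::idom \<Rightarrow> 'a fract" where "tf p = Fract p 1"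

lemma tf_add [simp]: "tf (p + q) = tf p + tf q" unfolding tf_def by simp
lemma tf_mult [simp]: "tf (p * q) = tf p * tf q" unfolding tf_def by simp
lemma tf_diff [simp]: "tf (p - q) = tf p - tf q" unfolding tf_def by simp
lemma tf_0 [simp]: "tf 0 = 0" unfolding tf_def by (simp add: Zero_fract_def)
lemma tf_1 [simp]: "tf 1 = 1" unfolding tf_def by (simp add: One_fract_def)
lemma tf_eq_iff [simp]: "tf p = tf q \<longleftrightarrow> p = q" unfolding tf_def by (simp add: eq_fract)
lemma tf_0_iff [simp]: "tf p = 0 \<longleftrightarrow> p = 0" using tf_eq_iff[of p 0] by simp

lemma Fract_eq_div: "r \<noteq> 0 \<Longrightarrow> Fract p r = tf p / tf r"
  unfolding tf_def by simp

lemma emb_kt_tf: "emb_kt c = tf [:c:]" unfolding emb_kt_def tf_def by simp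

lemma emb_kt_add [simp]: "emb_kt (x + y) = emb_kt x + emb_kt y"
  unfolding emb_kt_tf by (simp flip: tf_add)
lemma emb_kt_mult [simp]: "emb_kt (x * y) = emb_kt x * emb_kt y"
  unfolding emb_kt_tf by (simp flip: tf_mult)
lemma emb_kt_diff [simp]: "emb_kt (x - y) = emb_kt x - emb_kt y"
  unfolding emb_kt_tf by (simp flip: tf_diff)
lemma emb_kt_0 [simp]: "emb_kt 0 = 0" unfolding emb_kt_tf by simp
lemma emb_kt_1 [simp]: "emb_kt 1 = 1" unfolding emb_kt_tf by (simp add: one_pCons[symmetric])
lemma emb_kt_0_iff [simp]: "emb_kt x = 0 \<longleftrightarrow> x = 0" unfolding emb_kt_tf by simp
lemma emb_kt_inverse [simp]: "emb_kt (inverse x) = inverse (emb_kt x)"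
proof (cases "x = 0")
  case False
  have "emb_kt (inverse x) * emb_kt x = 1" using False by (simp flip: emb_kt_mult)
  then show ?thesis using False by (simp add: field_simps)
qed simp
lemma emb_kt_divide [simp]: "emb_kt (x / y) = emb_kt x / emb_kt y"
  by (simp add: divide_inverse)

lemma common_denom:
  fixes v :: "nat \<Rightarrow> 'a::idom fract"
  shows "\<exists>R V. R \<noteq> 0 \<and> (\<forall>i\<le>n. tf R * v i = tf (V i))"
proof (induction n)
  case 0
  obtain p r where "v 0 = Fract p r" "r \<noteq> 0" by (cases "v 0")
  then show ?case
    by (intro exI[of _ r] exI[of _ "\<lambda>i. p"]) (simp add: Fract_eq_div)
next
  case (Suc n)
  then obtain R V where RV: "R \<noteq> 0" "\<forall>i\<le>n. tf R * v i = tf (V i)" by blast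
  obtain p r where pr: "v (Suc n) = Fract p r" "r \<noteq> 0" by (cases "v (Suc n)")
  show ?case
  proof (intro exI[of _ "R * r"] exI[of _ "\<lambda>i. if i \<le> n then V i * r else p * R"] conjI allI impI)
    show "R * r \<noteq> 0" using RV pr by simp
    fix i assume "i \<le> Suc n"
    then consider "i \<le> n" | "i = Suc n" by linarith
    then show "tf (R * r) * v i = tf (if i \<le> n then V i * r else p * R)"
    proof cases
      case 1
      then have "tf R * v i = tf (V i)" using RV by simp
      then show ?thesis using 1 by (simp add: mult_ac)
    next
      case 2
      then show ?thesis using pr by (simp add: Fract_eq_div)
    qed
  qed
qed

lemma infinite_k: "infinite (UNIV :: 'k::field_char_0 set)"
  by (rule infinite_UNIV_char_0)

lemma aniso_K:
  fixes a :: "nat \<Rightarrow> nat \<Rightarrow> 'k::field_char_0" and v :: "nat \<Rightarrow> 'k poly fract"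
  assumes an: "anisotropic_phi a m" and z: "phi_eval emb_kt a m v = 0" and i: "i \<le> m"
  shows "v i = 0"
proof -
  obtain R V where RV: "R \<noteq> 0" "\<forall>i\<le>m. tf R * v i = tf (V i)" using common_denom by blast
  have "phi_eval emb_kt a m (\<lambda>i. tf R * v i) = 0" using z by (simp add: phi_scale)
  moreover have "phi_eval emb_kt a m (\<lambda>i. tf R * v i) = phi_eval emb_kt a m (\<lambda>i. tf (V i))"
    by (rule phi_cong) (simp add: RV)
  moreover have "phi_eval emb_kt a m (\<lambda>i. tf (V i)) = tf (phi_eval (\<lambda>c. [:c:]) a m V)"
    by (rule phi_hom) (simp_all add: emb_kt_tf)
  ultimately have P0: "phi_eval (\<lambda>c. [:c:]) a m V = 0" by simp
  have "\<forall>x. poly (V i) x = 0"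
  proof
    fix x
    have "phi_eval id a m (\<lambda>j. poly (V j) x) = poly (phi_eval (\<lambda>c. [:c:]) a m V) x"
      by (rule phi_hom) simp_all
    then have "phi_eval id a m (\<lambda>j. poly (V j) x) = 0" using P0 by simp
    then show "poly (V i) x = 0" using an i unfolding anisotropic_phi_def by blast
  qed
  then have "V i = 0" using poly_all_0_iff_0 by blast
  then have "tf R * v i = 0" using RV i by simp
  then show ?thesis using RV by simp
qed



definition pt :: "nat \<Rightarrow> 'a::zero \<Rightarrow> 'a \<Rightarrow> (nat \<Rightarrow> 'a) \<Rightarrow> nat \<Rightarrow> 'a" where
  "pt m c d z = (\<lambda>i. if i = 0 then c else if i = 1 then d else if i < m + 2 then z (i - 2) else 0)"

lemma inX_iff: "in_X e a m x \<longleftrightarrow> x 0 * x 1 = 1 - qf_eval e a m (\<lambda>j. x (Suc (Suc j))) \<and> (\<forall>i\<ge>m+2. x i = 0)"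
  unfolding in_X_def phi_eval_def by simp

lemma pt_qf: "qf_eval e a m (\<lambda>j. pt m c d z (Suc (Suc j))) = qf_eval e a m z"
  by (rule qf_cong) (simp add: pt_def)

lemma inX_pt: "in_X e a m (pt m c d z) \<longleftrightarrow> c * d = 1 - qf_eval e a m z"
  unfolding inX_iff pt_qf by (simp add: pt_def)

lemma pt_eta: "in_X e a m x \<Longrightarrow> x = pt m (x 0) (x 1) (\<lambda>j. x (Suc (Suc j)))"
proof
  fix i assume X: "in_X e a m x"
  show "x i = pt m (x 0) (x 1) (\<lambda>j. x (Suc (Suc j))) i"
  proof (cases "i < 2")
    case True then show ?thesis by (cases i) (auto simp: pt_def)
  next
    case False
    then have i: "i = Suc (Suc (i - 2))" by simp
    show ?thesis
    proof (cases "i < m + 2")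
      case True then show ?thesis using False i by (simp add: pt_def)
    next
      case F2: False then show ?thesis using False X unfolding inX_iff by (simp add: pt_def)
    qed
  qed
qed

lemma emb_kts_poly [simp]: "poly (emb_kts c) s = emb_kt c"
  unfolding emb_kts_def by simp

lemma poly_qf_kts: "poly (qf_eval emb_kts a m Y) s = qf_eval emb_kt a m (\<lambda>i. poly (Y i) s)"
  by (rule qf_hom[symmetric]) simp_all

abbreviation H where "H a m \<equiv> A1_chain_homotopic a m"

lemma H_refl: "H a m x x" unfolding A1_chain_homotopic_def by simp

lemma H_trans: "H a m x y \<Longrightarrow> H a m y z \<Longrightarrow> H a m x z"
  unfolding A1_chain_homotopic_def by (rule rtranclp_trans)

lemma H_sym: "H a m x y \<Longrightarrow> H a m y x"
  unfolding A1_chain_homotopic_def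
proof (induction rule: rtranclp_induct)
  case base then show ?case by simp
next
  case (step y z)
  then have "(\<lambda>x y. A1_homotopic a m x y \<or> A1_homotopic a m y x) z y" by blast
  then show ?case using step(3) by (rule converse_rtranclp_into_rtranclp)
qed

lemma H_hom: "A1_homotopic a m x y \<Longrightarrow> H a m x y"
  unfolding A1_chain_homotopic_def by (rule r_into_rtranclp) simp

lemma H_homI:
  assumes "in_X emb_kts a m h" "\<And>i. poly (h i) 0 = x i" "\<And>i. poly (h i) 1 = y i"
  shows "H a m x y"
  apply (rule H_hom) unfolding A1_homotopic_def using assms by (intro exI[of _ h]) auto

lemma M1:
  fixes x :: "nat \<Rightarrow> 'k::field poly fract"
  assumes X: "in_X emb_kt a m x" and x0: "x 0 \<noteq> 0"
  shows "H a m x (pt m (x 0) ((1 - qf_eval emb_kt a m z) / x 0) z)"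
proof -
  define Y where "Y = (\<lambda>j. [:x (Suc (Suc j)), z j - x (Suc (Suc j)):])"
  define h where "h = pt m [:x 0:] (smult (1 / x 0) (1 - qf_eval emb_kts a m Y)) Y"
  have X': "x 0 * x 1 = 1 - qf_eval emb_kt a m (\<lambda>j. x (Suc (Suc j)))" "\<forall>i\<ge>m+2. x i = 0"
    using X unfolding inX_iff by auto
  show ?thesis
  proof (rule H_homI)
    show "in_X emb_kts a m h" unfolding h_def inX_pt using x0 by simp
    have Y0: "(\<lambda>j. poly (Y j) 0) = (\<lambda>j. x (Suc (Suc j)))" unfolding Y_def by simp
    have Y1: "(\<lambda>j. poly (Y j) 1) = z" unfolding Y_def by simp
    fix i
    show "poly (h i) 0 = x i"
      using X' x0 by (subst pt_eta[OF X]) (auto simp: h_def pt_def poly_qf_kts Y0 field_simps, simp add: Y_def)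
    show "poly (h i) 1 = pt m (x 0) ((1 - qf_eval emb_kt a m z) / x 0) z i"
      by (auto simp: h_def pt_def poly_qf_kts Y1 field_simps, simp add: Y_def)
  qed
qed

lemma M2:
  fixes x :: "nat \<Rightarrow> 'k::field poly fract"
  assumes X: "in_X emb_kt a m x" and x1: "x 1 \<noteq> 0"
  shows "H a m x (pt m ((1 - qf_eval emb_kt a m z) / x 1) (x 1) z)"
proof -
  define Y where "Y = (\<lambda>j. [:x (Suc (Suc j)), z j - x (Suc (Suc j)):])"
  define h where "h = pt m (smult (1 / x 1) (1 - qf_eval emb_kts a m Y)) [:x 1:] Y"
  have X': "x 0 * x 1 = 1 - qf_eval emb_kt a m (\<lambda>j. x (Suc (Suc j)))" "\<forall>i\<ge>m+2. x i = 0"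
    using X unfolding inX_iff by auto
  show ?thesis
  proof (rule H_homI)
    show "in_X emb_kts a m h" unfolding h_def inX_pt using x1 by (simp add: mult.commute)
    have Y0: "(\<lambda>j. poly (Y j) 0) = (\<lambda>j. x (Suc (Suc j)))" unfolding Y_def by simp
    have Y1: "(\<lambda>j. poly (Y j) 1) = z" unfolding Y_def by simp
    fix i
    show "poly (h i) 0 = x i"
      using X' x1 by (subst pt_eta[OF X]) (auto simp: h_def pt_def poly_qf_kts Y0 field_simps, simp add: Y_def)
    show "poly (h i) 1 = pt m ((1 - qf_eval emb_kt a m z) / x 1) (x 1) z i"
      by (auto simp: h_def pt_def poly_qf_kts Y1 field_simps, simp add: Y_def)
  qed
qed

lemma qf_const_kts: "qf_eval emb_kts a m (\<lambda>j. [:w j:]) = [:qf_eval emb_kt a m w:]"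
  by (rule qf_hom) (simp_all add: emb_kts_def)

lemma Lin1:
  fixes w :: "nat \<Rightarrow> 'k::field poly fract"
  assumes "qf_eval emb_kt a m w = 1"
  shows "H a m (pt m c 0 w) (pt m d 0 w)"
proof (rule H_homI)
  show "in_X emb_kts a m (pt m [:c, d - c:] 0 (\<lambda>j. [:w j:]))"
    unfolding inX_pt qf_const_kts assms by simp
  fix i
  show "poly (pt m [:c, d - c:] 0 (\<lambda>j. [:w j:]) i) 0 = pt m c 0 w i" by (simp add: pt_def)
  show "poly (pt m [:c, d - c:] 0 (\<lambda>j. [:w j:]) i) 1 = pt m d 0 w i" by (simp add: pt_def)
qed

lemma Lin2:
  fixes w :: "nat \<Rightarrow> 'k::field poly fract"
  assumes "qf_eval emb_kt a m w = 1"
  shows "H a m (pt m 0 c w) (pt m 0 d w)"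
proof (rule H_homI)
  show "in_X emb_kts a m (pt m 0 [:c, d - c:] (\<lambda>j. [:w j:]))"
    unfolding inX_pt qf_const_kts assms by simp
  fix i
  show "poly (pt m 0 [:c, d - c:] (\<lambda>j. [:w j:]) i) 0 = pt m 0 c w i" by (simp add: pt_def)
  show "poly (pt m 0 [:c, d - c:] (\<lambda>j. [:w j:]) i) 1 = pt m 0 d w i" by (simp add: pt_def)
qed

lemma iso_all:
  fixes x w0 :: "nat \<Rightarrow> 'k::field poly fract"
  assumes w0: "qf_eval emb_kt a m w0 = 1" and X: "in_X emb_kt a m x"
  shows "H a m x (pt m 0 0 w0)"
proof -
  have X': "x 0 * x 1 = 1 - qf_eval emb_kt a m (\<lambda>j. x (Suc (Suc j)))"
    using X unfolding inX_iff by auto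
  consider "x 0 \<noteq> 0" | "x 0 = 0" "x 1 \<noteq> 0" | "x 0 = 0" "x 1 = 0" by blast
  then show ?thesis
  proof cases
    case 1
    have "H a m x (pt m (x 0) ((1 - qf_eval emb_kt a m w0) / x 0) w0)" by (rule M1[OF X 1])
    then have "H a m x (pt m (x 0) 0 w0)" using w0 by simp
    then show ?thesis using Lin1[OF w0] H_trans by blast
  next
    case 2
    have "H a m x (pt m ((1 - qf_eval emb_kt a m w0) / x 1) (x 1) w0)" by (rule M2[OF X 2(2)])
    then have "H a m x (pt m 0 (x 1) w0)" using w0 by simp
    then show ?thesis using Lin2[OF w0] H_trans by blast
  next
    case 3
    define y where "y = (\<lambda>j. x (Suc (Suc j)))"
    have qy: "qf_eval emb_kt a m y = 1" using X' 3 unfolding y_def by simp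
    have e: "x = pt m 0 0 y" using pt_eta[OF X] 3 unfolding y_def by simp
    have "H a m (pt m 0 0 y) (pt m 1 0 y)" by (rule Lin1[OF qy])
    moreover have "H a m (pt m 1 0 y) (pt m 1 0 w0)"
    proof -
      have X1: "in_X emb_kt a m (pt m 1 0 y)" unfolding inX_pt using qy by simp
      have "H a m (pt m 1 0 y) (pt m (pt m 1 0 y 0) ((1 - qf_eval emb_kt a m w0) / pt m 1 0 y 0) w0)"
        by (rule M1[OF X1]) (simp add: pt_def)
      then show ?thesis using w0 by (simp add: pt_def)
    qed
    moreover have "H a m (pt m 1 0 w0) (pt m 0 0 w0)" by (rule Lin1[OF w0])
    ultimately show ?thesis unfolding e using H_trans by blast
  qed
qed



lemma ak_gen:
  fixes a :: "nat \<Rightarrow> nat \<Rightarrow> 'k::field_char_0"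
  assumes an: "anisotropic_phi a m"
  shows "phi_eval emb_kt a m v = 0 \<Longrightarrow> i \<le> m \<Longrightarrow> v i = 0"
  using aniso_K[OF an] by blast

lemma ak1:
  fixes a :: "nat \<Rightarrow> nat \<Rightarrow> 'k::field_char_0"
  assumes an: "anisotropic_phi a m"
  shows "1 - qf_eval emb_kt a m w \<noteq> 0"
proof
  assume z: "1 - qf_eval emb_kt a m w = 0"
  define v :: "nat \<Rightarrow> 'k poly fract" where "v = (\<lambda>i. if i = 0 then 1 else w (i - 1))"
  have "phi_eval emb_kt a m v = 1 - qf_eval emb_kt a m w"
    unfolding phi_eval_def v_def by simp
  then have "v 0 = 0" using ak_gen[OF an] z by simp
  then show False unfolding v_def by simp
qed

lemma ak2:
  fixes a :: "nat \<Rightarrow> nat \<Rightarrow> 'k::field_char_0"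
  assumes an: "anisotropic_phi a m" and j: "j < m" "w j \<noteq> 0"
  shows "qf_eval emb_kt a m w \<noteq> 0"
proof
  assume z: "qf_eval emb_kt a m w = 0"
  define v :: "nat \<Rightarrow> 'k poly fract" where "v = (\<lambda>i. if i = 0 then 0 else w (i - 1))"
  have "phi_eval emb_kt a m v = - qf_eval emb_kt a m w"
    unfolding phi_eval_def v_def by simp
  then have "v (Suc j) = 0" using ak_gen[OF an] z j by simp
  then show False unfolding v_def using j by simp
qed

definition N :: "nat \<Rightarrow> 'a::field \<Rightarrow> nat \<Rightarrow> 'a" where
  "N m c = pt m c (inverse c) (\<lambda>j. 0)"

lemma N_inX: "c \<noteq> 0 \<Longrightarrow> in_X e a m (N m c)"
  unfolding N_def inX_pt by (simp add: qf_zero)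

lemma pt_0 [simp]: "pt m c d z 0 = c" unfolding pt_def by simp
lemma pt_1 [simp]: "pt m c d z 1 = d" unfolding pt_def by simp
lemma pt_Suc0 [simp]: "pt m c d z (Suc 0) = d" unfolding pt_def by simp

lemma N_0 [simp]: "N m c 0 = c" unfolding N_def pt_def by simp

lemma core:
  fixes a :: "nat \<Rightarrow> nat \<Rightarrow> 'k::field_char_0"
  assumes an: "anisotropic_phi a m" and b: "b \<noteq> 0"
  shows "H a m (N m b) (N m (b / (1 - qf_eval emb_kt a m w)))"
proof -
  define e where "e = 1 - qf_eval emb_kt a m w"
  have e0: "e \<noteq> 0" unfolding e_def by (rule ak1[OF an])
  have h1: "H a m (N m b) (pt m b (e / b) w)"
    using M1[OF N_inX[OF b], where z=w] b unfolding e_def by simp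
  have X': "in_X emb_kt a m (pt m b (e / b) w)" unfolding inX_pt e_def using b by simp
  have x1: "pt m b (e / b) w 1 \<noteq> 0" using e0 b by (simp add: pt_def)
  have h2: "H a m (pt m b (e / b) w) (pt m ((1 - qf_eval emb_kt a m (\<lambda>j. 0)) / (e / b)) (e / b) (\<lambda>j. 0))"
    using M2[OF X' x1, where z="\<lambda>j. 0"] by (simp add: pt_1)
  have "pt m ((1 - qf_eval emb_kt a m (\<lambda>j. 0)) / (e / b)) (e / b) (\<lambda>j. 0) = N m (b / e)"
    unfolding N_def by (simp add: qf_zero)
  then show ?thesis using H_trans[OF h1 h2] unfolding e_def by simp
qed

definition GG :: "(nat \<Rightarrow> nat \<Rightarrow> 'k::field) \<Rightarrow> nat \<Rightarrow> 'k poly fract set" where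
  "GG a m = {r. r \<noteq> 0 \<and> (\<forall>c. c \<noteq> 0 \<longrightarrow> H a m (N m c) (N m (c * r)))}"

lemma GG_mult:
  fixes a :: "nat \<Rightarrow> nat \<Rightarrow> 'k::field"
  shows "r \<in> GG a m \<Longrightarrow> s \<in> GG a m \<Longrightarrow> r * s \<in> GG a m"
  unfolding GG_def
proof (safe)
  fix c :: "'k poly fract" assume r: "r \<noteq> 0" "\<forall>c. c \<noteq> 0 \<longrightarrow> H a m (N m c) (N m (c * r))"
    and s: "s \<noteq> 0" "\<forall>c. c \<noteq> 0 \<longrightarrow> H a m (N m c) (N m (c * s))" and c: "c \<noteq> 0"
  show "r * s = 0 \<Longrightarrow> False" using r s by simp
  have "H a m (N m c) (N m (c * r))" using r c by blast
  moreover have "H a m (N m (c * r)) (N m (c * r * s))" using s r c by simp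
  ultimately show "H a m (N m c) (N m (c * (r * s)))" using H_trans by (metis mult.assoc)
qed

lemma GG_inv:
  fixes a :: "nat \<Rightarrow> nat \<Rightarrow> 'k::field"
  shows "r \<in> GG a m \<Longrightarrow> inverse r \<in> GG a m"
  unfolding GG_def
proof (safe)
  fix c :: "'k poly fract" assume r: "r \<noteq> 0" "\<forall>c. c \<noteq> 0 \<longrightarrow> H a m (N m c) (N m (c * r))" and c: "c \<noteq> 0"
  show "inverse r = 0 \<Longrightarrow> False" using r by simp
  have "H a m (N m (c * inverse r)) (N m (c * inverse r * r))" using r c by simp
  moreover have "c * inverse r * r = c" using r by simp
  ultimately show "H a m (N m c) (N m (c * inverse r))" using H_sym by metis
qed

lemma GG_D1inv:
  fixes a :: "nat \<Rightarrow> nat \<Rightarrow> 'k::field_char_0"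
  assumes an: "anisotropic_phi a m"
  shows "inverse (1 - qf_eval emb_kt a m w) \<in> GG a m"
  unfolding GG_def using core[OF an] ak1[OF an] by (simp add: divide_inverse)

lemma GG_D1:
  fixes a :: "nat \<Rightarrow> nat \<Rightarrow> 'k::field_char_0"
  assumes an: "anisotropic_phi a m"
  shows "1 - qf_eval emb_kt a m w \<in> GG a m"
  using GG_inv[OF GG_D1inv[OF an, of w]] by simp

lemma GG_div: "r \<in> GG a m \<Longrightarrow> s \<in> GG a m \<Longrightarrow> r / s \<in> GG a m"
  by (simp add: divide_inverse GG_mult GG_inv)

lemma GG_sq:
  fixes a :: "nat \<Rightarrow> nat \<Rightarrow> 'k::field_char_0"
  assumes an: "anisotropic_phi a m" and m: "m \<ge> 1" and x: "x \<noteq> 0"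
  shows "x * x \<in> GG a m"
proof -
  define e0 :: "nat \<Rightarrow> 'k poly fract" where "e0 = (\<lambda>j. if j = 0 then 1 else 0)"
  define b where "b = qf_eval emb_kt a m e0"
  have b0: "b \<noteq> 0" unfolding b_def by (rule ak2[OF an, of 0]) (use m in \<open>simp_all add: e0_def\<close>)
  define E where "E = (\<lambda>l. 1 - l * l * b)"
  have EG: "E l \<in> GG a m" for l
  proof -
    have "E l = 1 - qf_eval emb_kt a m (\<lambda>j. l * e0 j)" unfolding E_def b_def qf_scale by simp
    then show ?thesis using GG_D1[OF an] by simp
  qed
  have Enz: "E l \<noteq> 0" for l
    using EG unfolding GG_def by blast
  define mu where "mu = (x - 1) / b"
  define nu where "nu = (1 + mu) / x"
  have mub: "mu * b = x - 1" unfolding mu_def using b0 by simp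
  have "E 1 * E mu = x * x * E nu"
  proof -
    have "E 1 * E mu = 1 - b - mu * mu * b + (mu * b) * (mu * b)" unfolding E_def by (simp add: algebra_simps)
    also have "\<dots> = 1 - b - mu * mu * b + (x - 1) * (x - 1)" by (simp add: mub)
    also have "\<dots> = x * x - (1 + mu) * (1 + mu) * b"
    proof -
      have xe: "x = mu * b + 1" using mub by (metis diff_add_cancel)
      show ?thesis using xe by (simp add: algebra_simps)
    qed
    also have "\<dots> = x * x * E nu" unfolding E_def nu_def using x by (simp add: field_simps)
    finally show ?thesis .
  qed
  then have "x * x = E 1 * E mu / E nu" using Enz[of nu] by (simp add: field_simps)
  then show ?thesis using EG GG_mult GG_div by metis
qed

lemma GG_negq:
  fixes a :: "nat \<Rightarrow> nat \<Rightarrow> 'k::field_char_0"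
  assumes an: "anisotropic_phi a m" and b0: "qf_eval emb_kt a m w \<noteq> 0"
  shows "- qf_eval emb_kt a m w \<in> GG a m"
proof -
  define b where "b = qf_eval emb_kt a m w"
  have b0': "b \<noteq> 0" using b0 unfolding b_def .
  have q2: "qf_eval emb_kt a m (\<lambda>j. inverse b * w j) = inverse b" unfolding qf_scale b_def[symmetric]
    using b0' by (simp add: field_simps)
  have G1: "1 - b \<in> GG a m" unfolding b_def by (rule GG_D1[OF an])
  have G2: "1 - inverse b \<in> GG a m" using GG_D1[OF an, of "\<lambda>j. inverse b * w j"] q2 by simp
  have n1: "1 - b \<noteq> 0" unfolding b_def by (rule ak1[OF an])
  have n2: "1 - inverse b \<noteq> 0" using ak1[OF an, of "\<lambda>j. inverse b * w j"] q2 by simp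
  have "- b = (1 - b) / (1 - inverse b)"
    using b0' n2 n1 by (simp add: field_simps)
  then show ?thesis using GG_div[OF G1 G2] unfolding b_def by simp
qed

lemma D_sub_GG:
  fixes a :: "nat \<Rightarrow> nat \<Rightarrow> 'k::field_char_0"
  assumes an: "anisotropic_phi a m" and m: "m \<ge> 1" and d: "d \<in> D_phi emb_kt a m"
  shows "d \<in> GG a m"
proof -
  from d obtain v where dn: "d \<noteq> 0" and dv: "d = phi_eval emb_kt a m v" unfolding D_phi_def by blast
  define w where "w = (\<lambda>i. v (Suc i))"
  have dw: "d = v 0 * v 0 - qf_eval emb_kt a m w" unfolding dv phi_eval_def w_def ..
  show ?thesis
  proof (cases "v 0 = 0")
    case True
    then have "d = - qf_eval emb_kt a m w" using dw by simp
    then show ?thesis using GG_negq[OF an, of w] dn by simp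
  next
    case False
    have "qf_eval emb_kt a m (\<lambda>j. inverse (v 0) * w j) = inverse (v 0) * inverse (v 0) * qf_eval emb_kt a m w"
      by (rule qf_scale)
    then have "d = (v 0 * v 0) * (1 - qf_eval emb_kt a m (\<lambda>j. inverse (v 0) * w j))"
      using dw False by (simp add: field_simps)
    then show ?thesis using GG_mult[OF GG_sq[OF an m False] GG_D1[OF an]] by simp
  qed
qed

lemma gen_sub_GG:
  fixes a :: "nat \<Rightarrow> nat \<Rightarrow> 'k::field_char_0"
  assumes an: "anisotropic_phi a m" and m: "m \<ge> 1" and g: "g \<in> gen_subgroup (D_phi emb_kt a m)"
  shows "g \<in> GG a m"
  using g
proof (induction rule: gen_subgroup.induct)
  case one
  then show ?case unfolding GG_def by (simp add: H_refl)
next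
  case (mult x d)
  then show ?case using GG_mult D_sub_GG[OF an m] by blast
next
  case (mult_inv x d)
  then show ?case using GG_mult GG_inv D_sub_GG[OF an m] by blast
qed



lemma gs_mult: assumes "x \<in> gen_subgroup S" "y \<in> gen_subgroup S" shows "x * y \<in> gen_subgroup S"
  using assms(2)
proof (induction y rule: gen_subgroup.induct)
  case one then show ?case using assms(1) by simp
next
  case (mult y d)
  then have "x * y * d \<in> gen_subgroup S" by (simp add: gen_subgroup.mult)
  then show ?case by (simp add: mult.assoc)
next
  case (mult_inv y d)
  then have "x * y * inverse d \<in> gen_subgroup S" by (simp add: gen_subgroup.mult_inv)
  then show ?case by (simp add: mult.assoc)
qed

lemma gs_inv: "x \<in> gen_subgroup S \<Longrightarrow> inverse x \<in> gen_subgroup S"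
proof (induction x rule: gen_subgroup.induct)
  case one then show ?case by (simp add: gen_subgroup.one)
next
  case (mult x d)
  then have "inverse x * inverse d \<in> gen_subgroup S" by (simp add: gen_subgroup.mult_inv)
  then show ?case by (simp add: mult.commute)
next
  case (mult_inv x d)
  then have "inverse x * d \<in> gen_subgroup S" by (simp add: gen_subgroup.mult)
  then show ?case by (simp add: mult.commute)
qed

lemma gs_div: "x \<in> gen_subgroup S \<Longrightarrow> y \<in> gen_subgroup S \<Longrightarrow> x / y \<in> gen_subgroup S"
  by (simp add: divide_inverse gs_mult gs_inv)

lemma gs_D: "d \<in> S \<Longrightarrow> d \<in> gen_subgroup S"
  using gen_subgroup.mult[OF gen_subgroup.one] by fastforce

lemma gs_nz: assumes "0 \<notin> S" "x \<in> gen_subgroup S" shows "x \<noteq> 0"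
  using assms(2) by (induction x rule: gen_subgroup.induct) (use assms(1) in auto)

lemma D_nz: "0 \<notin> D_phi e a m" unfolding D_phi_def by simp

lemma Dval:
  fixes a :: "nat \<Rightarrow> nat \<Rightarrow> 'k::field_char_0"
  assumes an: "anisotropic_phi a m"
  shows "1 - qf_eval emb_kt a m w \<in> D_phi emb_kt a m"
proof -
  define v :: "nat \<Rightarrow> 'k poly fract" where "v = (\<lambda>i. if i = 0 then 1 else w (i - 1))"
  have pv: "1 - qf_eval emb_kt a m w = phi_eval emb_kt a m v"
    unfolding phi_eval_def v_def by simp
  show ?thesis unfolding D_phi_def mem_Collect_eq using ak1[OF an, of w] pv by blast
qed

lemma degree_qf_kts:
  assumes "\<And>i. i < m \<Longrightarrow> degree (Y i) \<le> d"
  shows "degree (qf_eval emb_kts a m Y) \<le> 2 * d"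
  unfolding qf_eval_def
proof (intro degree_sum_le)
  fix i j assume i: "i \<in> {..<m}" and j: "j \<in> {..<m}"
  have "degree (emb_kts (a i j) * Y i * Y j) \<le> degree (emb_kts (a i j) * Y i) + degree (Y j)"
    by (rule degree_mult_le)
  also have "\<dots> \<le> degree (emb_kts (a i j)) + degree (Y i) + degree (Y j)"
    using degree_mult_le by (metis add_le_mono1)
  also have "\<dots> \<le> 2 * d" using assms[of i] assms[of j] i j by (simp add: emb_kts_def)
  finally show "degree (emb_kts (a i j) * Y i * Y j) \<le> 2 * d" .
qed auto

lemma Desc:
  fixes a :: "nat \<Rightarrow> nat \<Rightarrow> 'k::field_char_0" and P Q :: "'k poly fract poly"
  assumes an: "anisotropic_phi a m" and sym: "symmetric_qf a m"
  shows "P * Q = 1 - qf_eval emb_kts a m y \<Longrightarrow> poly P 0 / poly P 1 \<in> gen_subgroup (D_phi emb_kt a m)"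
proof (induction "degree P" arbitrary: P Q y rule: less_induct)
  case less
  have val: "poly (1 - qf_eval emb_kts a m Y) s = 1 - qf_eval emb_kt a m (\<lambda>i. poly (Y i) s)"
    for Y :: "nat \<Rightarrow> 'k poly fract poly" and s
    by (simp add: poly_qf_kts)
  have valD: "poly (1 - qf_eval emb_kts a m Y) s \<in> D_phi emb_kt a m"
    for Y :: "nat \<Rightarrow> 'k poly fract poly" and s
    unfolding val by (rule Dval[OF an])
  have valnz: "poly (1 - qf_eval emb_kts a m Y) s \<noteq> 0"
    for Y :: "nat \<Rightarrow> 'k poly fract poly" and s
    using valD[of Y s] D_nz by metis
  have P0: "poly P s \<noteq> 0" for s
    using valnz[of y s] less.prems by (metis mult_zero_left poly_mult)
  show ?case
  proof (cases "degree P = 0")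
    case True
    then have "P = [:coeff P 0:]" using degree_0_id by metis
    then have "poly P 0 = poly P 1" by (metis poly_pCons poly_0 mult_zero_right add.right_neutral)
    then show ?thesis using P0[of 0] gen_subgroup.one by simp
  next
    case False
    have Pnz: "P \<noteq> 0" using False by auto
    define u where "u = (\<lambda>i. y i div P)"
    define y' where "y' = (\<lambda>i. y i mod P)"
    define Q' where "Q' = Q + 2 * bf emb_kts a m y' u + P * qf_eval emb_kts a m u"
    have ydec: "y = (\<lambda>i. y' i + P * u i)"
      unfolding y'_def u_def by (simp add: mod_div_mult_eq mult.commute)
    have symk: "\<And>i j. i < m \<Longrightarrow> j < m \<Longrightarrow> emb_kts (a i j) = emb_kts (a j i)"
      using sym unfolding symmetric_qf_def by simp
    have "qf_eval emb_kts a m y = qf_eval emb_kts a m y' + 2 * P * bf emb_kts a m y' u + P * P * qf_eval emb_kts a m u"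
      by (subst ydec) (rule qf_expand[where e=emb_kts and a=a and m=m, OF symk])
    then have eqQ': "Q' * P = 1 - qf_eval emb_kts a m y'"
      using less.prems unfolding Q'_def by (simp add: algebra_simps)
    have Q'P0: "Q' * P \<noteq> 0" using valnz[of y' 0] eqQ' by (metis poly_0)
    then have Q'nz: "Q' \<noteq> 0" by auto
    have dy': "degree (y' i) \<le> degree P - 1" for i
    proof (cases "P dvd y i")
      case True
      then have "y' i = 0" unfolding y'_def by simp
      then show ?thesis by simp
    next
      case F: False
      then have "degree (y' i) < degree P" unfolding y'_def by (rule degree_mod_less_degree[OF Pnz])
      then show ?thesis by simp
    qed
    have "degree (qf_eval emb_kts a m y') \<le> 2 * (degree P - 1)"
      by (rule degree_qf_kts) (rule dy')
    then have "degree (1 - qf_eval emb_kts a m y') \<le> 2 * (degree P - 1)"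
      using degree_diff_le_max[of 1 "qf_eval emb_kts a m y'"] by simp
    then have "degree Q' + degree P \<le> 2 * (degree P - 1)"
      using eqQ' degree_mult_eq[OF Q'nz Pnz] by simp
    then have dlt: "degree Q' < degree P" using False by linarith
    have IH: "poly Q' 0 / poly Q' 1 \<in> gen_subgroup (D_phi emb_kt a m)"
      using less.hyps[OF dlt eqQ'] .
    have d0: "poly Q' 0 * poly P 0 \<in> gen_subgroup (D_phi emb_kt a m)"
      using valD[of y' 0] eqQ' by (metis gs_D poly_mult)
    have d1: "poly Q' 1 * poly P 1 \<in> gen_subgroup (D_phi emb_kt a m)"
      using valD[of y' 1] eqQ' by (metis gs_D poly_mult)
    have q0: "poly Q' 0 \<noteq> 0" and q1: "poly Q' 1 \<noteq> 0"
      using valnz[of y' 0] valnz[of y' 1] eqQ' by (metis mult_zero_left poly_mult)+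
    have "poly P 0 / poly P 1 = (poly Q' 0 * poly P 0) / (poly Q' 1 * poly P 1) / (poly Q' 0 / poly Q' 1)"
      using q0 q1 P0[of 0] P0[of 1] by (simp add: field_simps)
    then show ?thesis using gs_div[OF gs_div[OF d0 d1] IH] by simp
  qed
qed

lemma hom_inv:
  fixes a :: "nat \<Rightarrow> nat \<Rightarrow> 'k::field_char_0"
  assumes an: "anisotropic_phi a m" and sym: "symmetric_qf a m"
    and h: "A1_homotopic a m x y"
  shows "x 0 / y 0 \<in> gen_subgroup (D_phi emb_kt a m)"
proof -
  obtain h where h: "in_X emb_kts a m h" "(\<lambda>i. poly (h i) 0) = x" "(\<lambda>i. poly (h i) 1) = y"
    using h unfolding A1_homotopic_def by blast
  have "h 0 * h 1 = 1 - qf_eval emb_kts a m (\<lambda>j. h (Suc (Suc j)))"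
    using h(1) unfolding inX_iff by simp
  then have "poly (h 0) 0 / poly (h 0) 1 \<in> gen_subgroup (D_phi emb_kt a m)"
    by (rule Desc[OF an sym])
  moreover have "x 0 = poly (h 0) 0" "y 0 = poly (h 0) 1" using h(2,3) by auto
  ultimately show ?thesis by simp
qed

lemma chain_inv:
  fixes a :: "nat \<Rightarrow> nat \<Rightarrow> 'k::field_char_0"
  assumes an: "anisotropic_phi a m" and sym: "symmetric_qf a m"
    and c: "H a m f x" and f0: "f 0 \<noteq> 0"
  shows "f 0 / x 0 \<in> gen_subgroup (D_phi emb_kt a m)"
  using c unfolding A1_chain_homotopic_def
proof (induction rule: rtranclp_induct)
  case base
  then show ?case using f0 gen_subgroup.one by simp
next
  case (step y z)
  have yz: "y 0 / z 0 \<in> gen_subgroup (D_phi emb_kt a m)"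
    using step(2) hom_inv[OF an sym] gs_inv by fastforce
  have y0: "y 0 \<noteq> 0" using gs_nz[OF D_nz step(3)] by auto
  have eq: "f 0 / y 0 * (y 0 / z 0) = f 0 / z 0"
    using y0 by (cases "z 0 = 0") (simp_all add: field_simps)
  show ?case using gs_mult[OF step(3) yz] unfolding eq .
qed



lemma rv_unique:
  assumes "rat_value_at q t c" "rat_value_at q t c'"
  shows "c = c'"
proof -
  obtain p r where pr: "poly r t \<noteq> 0" "q = Fract p r" "c = poly p t / poly r t"
    using assms(1) unfolding rat_value_at_def by blast
  obtain p' r' where pr': "poly r' t \<noteq> 0" "q = Fract p' r'" "c' = poly p' t / poly r' t"
    using assms(2) unfolding rat_value_at_def by blast
  have "r \<noteq> 0" "r' \<noteq> 0" using pr(1) pr'(1) by auto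
  then have "p * r' = p' * r" using pr(2) pr'(2) eq_fract(1) by metis
  then have "poly p t * poly r' t = poly p' t * poly r t" by (metis poly_mult)
  then show ?thesis unfolding pr(3) pr'(3) using pr(1) pr'(1) by (simp add: frac_eq_eq)
qed

lemma rv_add:
  assumes "rat_value_at q t c" "rat_value_at q' t c'"
  shows "rat_value_at (q + q') t (c + c')"
proof -
  obtain p r where pr: "poly r t \<noteq> 0" "q = Fract p r" "c = poly p t / poly r t"
    using assms(1) unfolding rat_value_at_def by blast
  obtain p' r' where pr': "poly r' t \<noteq> 0" "q' = Fract p' r'" "c' = poly p' t / poly r' t"
    using assms(2) unfolding rat_value_at_def by blast
  have "r \<noteq> 0" "r' \<noteq> 0" using pr(1) pr'(1) by auto
  then have "q + q' = Fract (p * r' + p' * r) (r * r')" using pr(2) pr'(2) by simp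
  moreover have "c + c' = poly (p * r' + p' * r) t / poly (r * r') t"
    unfolding pr(3) pr'(3) using pr(1) pr'(1) by (simp add: add_frac_eq)
  moreover have "poly (r * r') t \<noteq> 0" using pr(1) pr'(1) by simp
  ultimately show ?thesis unfolding rat_value_at_def by blast
qed

lemma rv_mult:
  assumes "rat_value_at q t c" "rat_value_at q' t c'"
  shows "rat_value_at (q * q') t (c * c')"
proof -
  obtain p r where pr: "poly r t \<noteq> 0" "q = Fract p r" "c = poly p t / poly r t"
    using assms(1) unfolding rat_value_at_def by blast
  obtain p' r' where pr': "poly r' t \<noteq> 0" "q' = Fract p' r'" "c' = poly p' t / poly r' t"
    using assms(2) unfolding rat_value_at_def by blast
  have "q * q' = Fract (p * p') (r * r')" using pr(2) pr'(2) by simp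
  moreover have "c * c' = poly (p * p') t / poly (r * r') t"
    unfolding pr(3) pr'(3) by simp
  moreover have "poly (r * r') t \<noteq> 0" using pr(1) pr'(1) by simp
  ultimately show ?thesis unfolding rat_value_at_def by blast
qed

lemma rv_emb: "rat_value_at (emb_kt c) t c"
  unfolding rat_value_at_def emb_kt_def by (rule exI[of _ "[:c:]"], rule exI[of _ 1]) simp

lemma rv_0: "rat_value_at 0 t 0"
  using rv_emb[of 0 t] by simp

lemma rv_1: "rat_value_at 1 t 1"
  using rv_emb[of 1 t] by simp

lemma rv_uminus:
  assumes "rat_value_at q t c" shows "rat_value_at (- q) t (- c)"
proof -
  have e: "emb_kt (-1) = -1" using emb_kt_diff[of 0 1] by simp
  show ?thesis using rv_mult[OF rv_emb[of "-1" t] assms] unfolding e by simp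
qed

lemma rv_diff:
  assumes "rat_value_at q t c" "rat_value_at q' t c'"
  shows "rat_value_at (q - q') t (c - c')"
  using rv_add[OF assms(1) rv_uminus[OF assms(2)]] by simp

lemma rv_sum:
  fixes n :: nat
  assumes "\<And>i. i < n \<Longrightarrow> rat_value_at (g i) t (c i)"
  shows "rat_value_at (\<Sum>i<n. g i) t (\<Sum>i<n. c i)"
  using assms by (induction n) (simp_all add: rv_0 rv_add)

lemma rv_qf:
  assumes "\<And>i. i < m \<Longrightarrow> rat_value_at (v i) t (c i)"
  shows "rat_value_at (qf_eval emb_kt a m v) t (qf_eval id a m c)"
  unfolding qf_eval_def
  by (intro rv_sum rv_mult) (simp_all add: assms rv_emb)

lemma eval_inX:
  fixes f :: "nat \<Rightarrow> 'k::field poly fract"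
  assumes X: "in_X emb_kt a m f" and v: "rat_map_value_at f t y"
  shows "in_X id a m y"
proof -
  have rv: "rat_value_at (f i) t (y i)" for i using v unfolding rat_map_value_at_def by blast
  have e: "f 0 * f 1 = 1 - qf_eval emb_kt a m (\<lambda>j. f (Suc (Suc j)))" and z: "\<forall>i\<ge>m+2. f i = 0"
    using X unfolding inX_iff by auto
  have "rat_value_at (f 0 * f 1) t (y 0 * y 1)" by (rule rv_mult[OF rv rv])
  moreover have "rat_value_at (f 0 * f 1) t (1 - qf_eval id a m (\<lambda>j. y (Suc (Suc j))))"
    unfolding e by (intro rv_diff rv_1 rv_qf rv)
  ultimately have "y 0 * y 1 = 1 - qf_eval id a m (\<lambda>j. y (Suc (Suc j)))" by (rule rv_unique)
  moreover have "\<forall>i\<ge>m+2. y i = 0"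
  proof (intro allI impI)
    fix i assume "i \<ge> m + 2"
    then have "rat_value_at (f i) t 0" using z rv_0 by simp
    then show "y i = 0" using rv_unique[OF rv] by metis
  qed
  ultimately show ?thesis unfolding inX_iff by simp
qed

lemma emb_inX:
  fixes y :: "nat \<Rightarrow> 'k::field"
  assumes "in_X id a m y"
  shows "in_X emb_kt a m (\<lambda>i. emb_kt (y i))"
proof -
  have e: "y 0 * y 1 = 1 - qf_eval id a m (\<lambda>j. y (Suc (Suc j)))" and z: "\<forall>i\<ge>m+2. y i = 0"
    using assms unfolding inX_iff by auto
  have "qf_eval emb_kt a m (\<lambda>j. emb_kt (y (Suc (Suc j)))) = emb_kt (qf_eval id a m (\<lambda>j. y (Suc (Suc j))))"
    by (rule qf_hom) simp_all
  then show ?thesis unfolding inX_iff using e z by (simp flip: emb_kt_mult emb_kt_diff emb_kt_1)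
qed

lemma exists_value:
  fixes f :: "nat \<Rightarrow> 'k::field_char_0 poly fract"
  assumes z: "\<forall>i\<ge>n. f i = 0"
  shows "\<exists>t y. rat_map_value_at f t y"
proof -
  have "\<forall>i. \<exists>pr. f i = Fract (fst pr) (snd pr) \<and> snd pr \<noteq> 0"
  proof
    fix i obtain p r where "f i = Fract p r" "r \<noteq> 0" by (cases "f i")
    then show "\<exists>pr. f i = Fract (fst pr) (snd pr) \<and> snd pr \<noteq> 0" by (intro exI[of _ "(p, r)"]) simp
  qed
  then obtain PR where PR: "\<And>i. f i = Fract (fst (PR i)) (snd (PR i)) \<and> snd (PR i) \<noteq> 0" by metis
  define R where "R = (\<Prod>i<n. snd (PR i))"
  have "R \<noteq> 0" unfolding R_def using PR by simp
  then have "finite {x. poly R x = 0}" by (rule poly_roots_finite)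
  then obtain t where t: "t \<notin> {x. poly R x = 0}" using ex_new_if_finite[OF infinite_UNIV_char_0] by blast
  have rt: "poly (snd (PR i)) t \<noteq> 0" if "i < n" for i
    using t that unfolding R_def by (simp add: poly_prod)
  define y where "y = (\<lambda>i. if i < n then poly (fst (PR i)) t / poly (snd (PR i)) t else 0)"
  have "rat_map_value_at f t y"
    unfolding rat_map_value_at_def
  proof
    fix i show "rat_value_at (f i) t (y i)"
    proof (cases "i < n")
      case True
      then show ?thesis unfolding rat_value_at_def y_def using PR[of i] rt[OF True] by auto
    next
      case False
      then show ?thesis using z rv_0 unfolding y_def by simp
    qed
  qed
  then show ?thesis by blast
qed



definition good :: "(nat \<Rightarrow> nat \<Rightarrow> 'k::field) \<Rightarrow> nat \<Rightarrow> 'k \<Rightarrow> 'k poly \<Rightarrow> bool" where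
  "good a m t P \<longleftrightarrow> (\<exists>e P'. P = [:-t, 1:] ^ (2 * e) * P' \<and> poly P' t \<noteq> 0 \<and>
      tf P' / emb_kt (poly P' t) \<in> gen_subgroup (D_phi emb_kt a m))"

lemma good_1: "good a m t 1"
  unfolding good_def by (rule exI[of _ 0], rule exI[of _ 1]) (simp add: gen_subgroup.one)

lemma good_mult:
  assumes "good a m t P" "good a m t Q" shows "good a m t (P * Q)"
proof -
  obtain e P' where P: "P = [:-t, 1:] ^ (2 * e) * P'" "poly P' t \<noteq> 0"
    "tf P' / emb_kt (poly P' t) \<in> gen_subgroup (D_phi emb_kt a m)"
    using assms(1) unfolding good_def by blast
  obtain f Q' where Q: "Q = [:-t, 1:] ^ (2 * f) * Q'" "poly Q' t \<noteq> 0"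
    "tf Q' / emb_kt (poly Q' t) \<in> gen_subgroup (D_phi emb_kt a m)"
    using assms(2) unfolding good_def by blast
  have "P * Q = [:-t, 1:] ^ (2 * (e + f)) * (P' * Q')"
    unfolding P(1) Q(1) by (simp add: power_add mult_ac distrib_left)
  moreover have "poly (P' * Q') t \<noteq> 0" using P(2) Q(2) by simp
  moreover have "tf (P' * Q') / emb_kt (poly (P' * Q') t) = (tf P' / emb_kt (poly P' t)) * (tf Q' / emb_kt (poly Q' t))"
    by simp
  ultimately show ?thesis unfolding good_def using gs_mult[OF P(3) Q(3)] by metis
qed

lemma factor_out:
  fixes V :: "nat \<Rightarrow> 'k::field poly"
  assumes nz: "\<exists>i\<le>m. V i \<noteq> 0"
  shows "\<exists>e V'. (\<forall>i\<le>m. V i = [:-t, 1:] ^ e * V' i) \<and> (\<exists>i\<le>m. poly (V' i) t \<noteq> 0)"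
proof -
  define S where "S = {i. i \<le> m \<and> V i \<noteq> 0}"
  have fin: "finite ((\<lambda>i. order t (V i)) ` S)" unfolding S_def by simp
  have ne: "(\<lambda>i. order t (V i)) ` S \<noteq> {}" using nz unfolding S_def by auto
  define e where "e = Min ((\<lambda>i. order t (V i)) ` S)"
  obtain i0 where i0: "i0 \<in> S" "order t (V i0) = e" using Min_in[OF fin ne] unfolding e_def by auto
  have le: "e \<le> order t (V i)" if "i \<in> S" for i unfolding e_def using fin that by simp
  have dv: "[:-t, 1:] ^ e dvd V i" if "i \<le> m" for i
    using le[of i] that unfolding order_divides S_def by auto
  define V' where "V' = (\<lambda>i. V i div [:-t, 1:] ^ e)"
  have eq: "V i = [:-t, 1:] ^ e * V' i" if "i \<le> m" for i
    unfolding V'_def using dv[OF that] by simp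
  have "poly (V' i0) t \<noteq> 0"
  proof
    assume "poly (V' i0) t = 0"
    then have "[:-t, 1:] dvd V' i0" by (simp add: poly_eq_0_iff_dvd)
    then obtain q where q: "V' i0 = [:-t, 1:] * q" by (auto elim: dvdE)
    have "V i0 = [:-t, 1:] ^ e * ([:-t, 1:] * q)" using eq[of i0] q i0(1) unfolding S_def by simp
    then have "V i0 = [:-t, 1:] ^ Suc e * q" by (simp only: power_Suc2 mult.assoc)
    then have "[:-t, 1:] ^ Suc e dvd V i0" by (rule dvdI)
    then have "Suc e \<le> order t (V i0)" using i0(1) unfolding order_divides S_def by auto
    then show False using i0(2) by simp
  qed
  then show ?thesis using eq i0(1) unfolding S_def by blast
qed

lemma good_gen:
  fixes a :: "nat \<Rightarrow> nat \<Rightarrow> 'k::field_char_0"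
  assumes an: "anisotropic_phi a m" and nz: "phi_eval (\<lambda>c. [:c:]) a m V \<noteq> 0"
  shows "good a m t (phi_eval (\<lambda>c. [:c:]) a m V)"
proof -
  have "\<exists>i\<le>m. V i \<noteq> 0"
  proof (rule ccontr)
    assume "\<not> ?thesis"
    then have "phi_eval (\<lambda>c. [:c:]) a m V = phi_eval (\<lambda>c. [:c:]) a m (\<lambda>i. 0 * V i)"
      by (intro phi_cong) simp
    then show False using nz unfolding phi_scale by simp
  qed
  then obtain e V' where V': "\<forall>i\<le>m. V i = [:-t, 1:] ^ e * V' i" "\<exists>i\<le>m. poly (V' i) t \<noteq> 0"
    using factor_out by blast
  define P' where "P' = phi_eval (\<lambda>c. [:c:]) a m V'"
  have "phi_eval (\<lambda>c. [:c:]) a m V = phi_eval (\<lambda>c. [:c:]) a m (\<lambda>i. [:-t, 1:] ^ e * V' i)"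
    by (intro phi_cong) (simp add: V'(1))
  then have eqP: "phi_eval (\<lambda>c. [:c:]) a m V = [:-t, 1:] ^ (2 * e) * P'"
    unfolding phi_scale P'_def by (simp add: power_add mult_2)
  define c where "c = (\<lambda>i. poly (V' i) t)"
  have pc: "poly P' t = phi_eval id a m c"
    unfolding P'_def c_def by (rule phi_hom[symmetric]) simp_all
  have pcnz: "poly P' t \<noteq> 0"
  proof
    assume "poly P' t = 0"
    then have "phi_eval id a m c = 0" using pc by simp
    then have "\<forall>i\<le>m. c i = 0" using an unfolding anisotropic_phi_def by blast
    then show False using V'(2) unfolding c_def by blast
  qed
  have tfP: "tf P' = phi_eval emb_kt a m (\<lambda>i. tf (V' i))"
    unfolding P'_def by (rule phi_hom[symmetric]) (simp_all add: emb_kt_tf)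
  have tfnz: "tf P' \<noteq> 0" using pcnz by auto
  have D1: "tf P' \<in> D_phi emb_kt a m" unfolding D_phi_def using tfP tfnz by blast
  have embP: "emb_kt (poly P' t) = phi_eval emb_kt a m (\<lambda>i. emb_kt (c i))"
    unfolding pc by (rule phi_hom[symmetric]) simp_all
  have D2: "emb_kt (poly P' t) \<in> D_phi emb_kt a m" unfolding D_phi_def using embP pcnz by auto
  show ?thesis unfolding good_def
    using eqP pcnz gs_div[OF gs_D[OF D1] gs_D[OF D2]] by blast
qed

lemma D_rep:
  fixes a :: "nat \<Rightarrow> nat \<Rightarrow> 'k::field_char_0"
  assumes an: "anisotropic_phi a m" and d: "d \<in> D_phi emb_kt a m"
  shows "\<exists>A B. good a m t A \<and> good a m t B \<and> d * tf B = tf A"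
proof -
  obtain v where dn: "d \<noteq> 0" and dv: "d = phi_eval emb_kt a m v" using d unfolding D_phi_def by blast
  obtain R V where RV: "R \<noteq> 0" "\<forall>i\<le>m. tf R * v i = tf (V i)" using common_denom by blast
  have "tf R * tf R * d = phi_eval emb_kt a m (\<lambda>i. tf R * v i)" unfolding phi_scale dv ..
  also have "\<dots> = phi_eval emb_kt a m (\<lambda>i. tf (V i))" by (rule phi_cong) (simp add: RV)
  also have "\<dots> = tf (phi_eval (\<lambda>c. [:c:]) a m V)" by (rule phi_hom) (simp_all add: emb_kt_tf)
  finally have eq: "d * tf (R * R) = tf (phi_eval (\<lambda>c. [:c:]) a m V)" by (simp add: mult_ac)
  have Anz: "phi_eval (\<lambda>c. [:c:]) a m V \<noteq> 0" using eq dn RV(1) by (metis mult_eq_0_iff tf_0_iff)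
  have RR: "R * R = phi_eval (\<lambda>c. [:c:]) a m (\<lambda>i. if i = 0 then R else 0)"
    unfolding phi_eval_def by (simp add: qf_zero)
  have Bg: "good a m t (R * R)" unfolding RR by (rule good_gen[OF an]) (metis RR RV(1) mult_eq_0_iff)
  show ?thesis using good_gen[OF an Anz] Bg eq by blast
qed

lemma gs_rep:
  fixes a :: "nat \<Rightarrow> nat \<Rightarrow> 'k::field_char_0"
  assumes an: "anisotropic_phi a m" and g: "g \<in> gen_subgroup (D_phi emb_kt a m)"
  shows "\<exists>P1 P2. good a m t P1 \<and> good a m t P2 \<and> g * tf P2 = tf P1"
  using g
proof (induction rule: gen_subgroup.induct)
  case one
  then show ?case using good_1 by (metis mult_1 tf_1)
next
  case (mult x d)
  obtain P1 P2 where P: "good a m t P1" "good a m t P2" "x * tf P2 = tf P1" using mult.IH by blast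
  obtain A B where AB: "good a m t A" "good a m t B" "d * tf B = tf A" using D_rep[OF an mult.hyps(2)] by blast
  have "x * d * tf (P2 * B) = tf (P1 * A)" using P(3) AB(3) by (simp flip: P(3) AB(3) add: mult_ac)
  then show ?case using good_mult P(1,2) AB(1,2) by blast
next
  case (mult_inv x d)
  obtain P1 P2 where P: "good a m t P1" "good a m t P2" "x * tf P2 = tf P1" using mult_inv.IH by blast
  obtain A B where AB: "good a m t A" "good a m t B" "d * tf B = tf A" using D_rep[OF an mult_inv.hyps(2)] by blast
  have dn: "d \<noteq> 0" using mult_inv.hyps(2) unfolding D_phi_def by simp
  have "x * inverse d * tf (P2 * A) = tf (P1 * B)"
    using dn by (simp flip: P(3) AB(3) add: mult_ac)
  then show ?case using good_mult P(1,2) AB(1,2) by blast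
qed

lemma cancel_pow:
  fixes A B :: "'k::field poly"
  assumes eq: "[:-t, 1:] ^ n * A = [:-t, 1:] ^ k * B" and A: "poly A t \<noteq> 0" and B: "poly B t \<noteq> 0"
  shows "n = k"
proof (rule ccontr)
  assume ne: "n \<noteq> k"
  have nz: "[:-t, 1:] ^ j \<noteq> (0 :: 'k poly)" for j by simp
  show False
  proof (cases "n < k")
    case True
    have "[:-t, 1:] ^ n * A = [:-t, 1:] ^ n * ([:-t, 1:] ^ (k - n) * B)"
      using eq True by (simp flip: power_add mult.assoc)
    then have "A = [:-t, 1:] ^ (k - n) * B" using nz by simp
    then have "poly A t = 0" using True by (simp add: poly_power)
    then show False using A by simp
  next
    case False
    then have "k < n" using ne by simp
    have "[:-t, 1:] ^ k * ([:-t, 1:] ^ (n - k) * A) = [:-t, 1:] ^ k * B"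
      using eq \<open>k < n\<close> by (simp flip: power_add mult.assoc)
    then have "B = [:-t, 1:] ^ (n - k) * A" using nz by simp
    then have "poly B t = 0" using \<open>k < n\<close> by (simp add: poly_power)
    then show False using B by simp
  qed
qed

lemma spec:
  fixes a :: "nat \<Rightarrow> nat \<Rightarrow> 'k::field_char_0"
  assumes an: "anisotropic_phi a m" and g: "g \<in> gen_subgroup (D_phi emb_kt a m)"
    and c: "c \<noteq> 0" and f0: "f0 = emb_kt c * g" and rv: "rat_value_at f0 t y0" and y0: "y0 \<noteq> 0"
  shows "f0 / emb_kt y0 \<in> gen_subgroup (D_phi emb_kt a m)"
proof -
  obtain p r where pr: "poly r t \<noteq> 0" "f0 = Fract p r" "y0 = poly p t / poly r t"
    using rv unfolding rat_value_at_def by blast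
  have rnz: "r \<noteq> 0" using pr(1) by auto
  have pnz: "poly p t \<noteq> 0" using pr(3) y0 by auto
  obtain P1 P2 where P: "good a m t P1" "good a m t P2" "g * tf P2 = tf P1" using gs_rep[OF an g] by blast
  obtain e1 Q1 where Q1: "P1 = [:-t, 1:] ^ (2 * e1) * Q1" "poly Q1 t \<noteq> 0"
    "tf Q1 / emb_kt (poly Q1 t) \<in> gen_subgroup (D_phi emb_kt a m)"
    using P(1) unfolding good_def by blast
  obtain e2 Q2 where Q2: "P2 = [:-t, 1:] ^ (2 * e2) * Q2" "poly Q2 t \<noteq> 0"
    "tf Q2 / emb_kt (poly Q2 t) \<in> gen_subgroup (D_phi emb_kt a m)"
    using P(2) unfolding good_def by blast
  have "tf p / tf r * tf P2 = emb_kt c * tf P1" using f0 pr(2) P(3) rnz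
    by (simp add: Fract_eq_div mult.assoc)
  then have "tf p * tf P2 = emb_kt c * tf r * tf P1" using rnz by (simp add: field_simps)
  then have "p * P2 = [:c:] * r * P1" by (simp add: emb_kt_tf flip: tf_mult)
  then have "[:-t, 1:] ^ (2 * e2) * (p * Q2) = [:-t, 1:] ^ (2 * e1) * ([:c:] * r * Q1)"
    unfolding Q1(1) Q2(1) by (simp add: mult_ac)
  moreover have "poly (p * Q2) t \<noteq> 0" using pnz Q2(2) by simp
  moreover have "poly ([:c:] * r * Q1) t \<noteq> 0" using c pr(1) Q1(2) by simp
  ultimately have e12: "2 * e2 = 2 * e1" and peq: "p * Q2 = [:c:] * r * Q1"
    using cancel_pow by (blast, metis cancel_pow mult_cancel_left power_not_zero pCons_eq_0_iff zero_neq_one)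
  have H1: "tf p * tf Q2 = emb_kt c * tf r * tf Q1" using peq by (simp add: emb_kt_tf flip: tf_mult)
  have "poly p t * poly Q2 t = c * poly r t * poly Q1 t" using peq by (metis poly_mult poly_pCons poly_0 mult_zero_right add.right_neutral)
  then have H2: "y0 * poly Q2 t = c * poly Q1 t" unfolding pr(3) using pr(1) by (simp add: field_simps)
  then have H2': "emb_kt y0 * emb_kt (poly Q2 t) = emb_kt c * emb_kt (poly Q1 t)" by (simp flip: emb_kt_mult)
  have nz: "tf r \<noteq> 0" "tf Q2 \<noteq> 0" "emb_kt y0 \<noteq> 0" "emb_kt (poly Q1 t) \<noteq> 0" "emb_kt (poly Q2 t) \<noteq> 0" "emb_kt c \<noteq> 0"
    using rnz Q2(2) y0 Q1(2) c by auto
  have "f0 / emb_kt y0 = (tf Q1 / emb_kt (poly Q1 t)) / (tf Q2 / emb_kt (poly Q2 t))"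
  proof -
    have "f0 = tf p / tf r" using pr(2) rnz by (simp add: Fract_eq_div)
    also have "\<dots> = emb_kt c * tf Q1 / tf Q2" using H1 nz by (simp add: field_simps)
    finally have "f0 / emb_kt y0 = emb_kt c * tf Q1 / (tf Q2 * emb_kt y0)" using nz by simp
    also have "\<dots> = emb_kt c * tf Q1 * emb_kt (poly Q2 t) / (tf Q2 * (emb_kt y0 * emb_kt (poly Q2 t)))"
      using nz by (simp add: field_simps)
    also have "\<dots> = emb_kt c * tf Q1 * emb_kt (poly Q2 t) / (tf Q2 * (emb_kt c * emb_kt (poly Q1 t)))"
      unfolding H2' ..
    also have "\<dots> = (tf Q1 / emb_kt (poly Q1 t)) / (tf Q2 / emb_kt (poly Q2 t))"
      using nz by (simp add: field_simps)
    finally show ?thesis .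
  qed
  then show ?thesis using gs_div[OF Q1(3) Q2(3)] by simp
qed



lemma bf_sym:
  assumes "\<And>i j. i < m \<Longrightarrow> j < m \<Longrightarrow> e (a i j) = e (a j i)"
  shows "bf e a m u z = bf e a m z u"
  unfolding bf_def
  apply (subst sum.swap)
  apply (rule sum.cong, simp)
  apply (rule sum.cong, simp)
  using assms by (simp add: mult_ac)

lemma iso_w0:
  fixes a :: "nat \<Rightarrow> nat \<Rightarrow> 'k::field_char_0"
  assumes nan: "\<not> anisotropic_phi a m" and reg: "regular_qf a m" and sym: "symmetric_qf a m"
  shows "\<exists>w. qf_eval id a m w = 1"
proof -
  obtain v i where v: "phi_eval id a m v = 0" "i \<le> m" "v i \<noteq> 0"
    using nan unfolding anisotropic_phi_def by blast
  define u where "u = (\<lambda>j. v (Suc j))"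
  have vu: "v 0 * v 0 = qf_eval id a m u" using v(1) unfolding phi_eval_def u_def by simp
  show ?thesis
  proof (cases "v 0 = 0")
    case False
    have "qf_eval id a m (\<lambda>j. inverse (v 0) * u j) = inverse (v 0) * inverse (v 0) * qf_eval id a m u"
      by (rule qf_scale)
    moreover have "inverse (v 0) * inverse (v 0) * (v 0 * v 0) = 1" using False by (simp add: field_simps)
    ultimately have "qf_eval id a m (\<lambda>j. inverse (v 0) * u j) = 1" unfolding vu by simp
    then show ?thesis by blast
  next
    case True
    have qu: "qf_eval id a m u = 0" using vu True by simp
    have "i \<noteq> 0" using True v(3) by (metis)
    then have uj: "i - 1 < m" "u (i - 1) \<noteq> 0" using v(2,3) unfolding u_def by auto
    have "\<not> (\<forall>w. (\<Sum>i<m. \<Sum>j<m. a i j * u i * w j) = 0)"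
      using reg uj unfolding regular_qf_def by blast
    then obtain z where z: "bf id a m u z \<noteq> 0" unfolding bf_def by auto
    have symk: "\<And>i j. i < m \<Longrightarrow> j < m \<Longrightarrow> id (a i j) = id (a j i)"
      using sym unfolding symmetric_qf_def by simp
    have bzu: "bf id a m z u \<noteq> 0" using z bf_sym[where e=id and a=a and m=m, OF symk] by metis
    define l where "l = (1 - qf_eval id a m z) / (2 * bf id a m z u)"
    have "qf_eval id a m (\<lambda>i. z i + l * u i) = qf_eval id a m z + 2 * l * bf id a m z u + l * l * qf_eval id a m u"
      by (rule qf_expand[where e=id and a=a and m=m, OF symk])
    also have "\<dots> = 1" unfolding qu l_def using bzu by (simp add: field_simps)
    finally show ?thesis by blast
  qed
qed

theorem corollary4p6:
  fixes a :: "nat \<Rightarrow> nat \<Rightarrow> 'k::field_char_0" and m :: nat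
    and f :: "nat \<Rightarrow> 'k poly fract"
  assumes "m \<ge> 1"
    and "symmetric_qf a m"
    and "regular_qf a m"
    and "in_X emb_kt a m f"
  shows "(anisotropic_phi a m \<longrightarrow>
           ((\<exists>c::'k. c \<noteq> 0 \<and> f 0 \<in> (\<lambda>g. emb_kt c * g) ` gen_subgroup (D_phi emb_kt a m))
            \<longleftrightarrow> cond2 a m f))
       \<and> (\<not> anisotropic_phi a m \<longrightarrow> cond2 a m f)"
proof (intro conjI impI)
  note m1 = assms(1) and sym = assms(2) and reg = assms(3) and X = assms(4)
  have fz: "\<forall>i\<ge>m+2. f i = 0" using X unfolding inX_iff by simp
  have gX: "in_X emb_kt a m (\<lambda>i. emb_kt (y i))" if "rat_map_value_at f t y" for t y
    by (rule emb_inX[OF eval_inX[OF X that]])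
  {
    assume an: "anisotropic_phi a m"
    have f0nz: "f 0 \<noteq> 0"
    proof
      assume "f 0 = 0"
      then have "1 - qf_eval emb_kt a m (\<lambda>j. f (Suc (Suc j))) = 0" using X unfolding inX_iff by simp
      then show False using ak1[OF an] by blast
    qed
    have toN: "H a m x (N m (x 0))" if "in_X emb_kt a m x" "x 0 \<noteq> 0" for x
    proof -
      have "H a m x (pt m (x 0) ((1 - qf_eval emb_kt a m (\<lambda>j. 0)) / x 0) (\<lambda>j. 0))"
        by (rule M1[OF that])
      moreover have "pt m (x 0) ((1 - qf_eval emb_kt a m (\<lambda>j. 0)) / x 0) (\<lambda>j. 0) = N m (x 0)"
        unfolding N_def by (simp add: qf_zero divide_inverse)
      ultimately show ?thesis by simp
    qed
    show "(\<exists>c::'k. c \<noteq> 0 \<and> f 0 \<in> (\<lambda>g. emb_kt c * g) ` gen_subgroup (D_phi emb_kt a m))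
            \<longleftrightarrow> cond2 a m f"
    proof
      assume "\<exists>c::'k. c \<noteq> 0 \<and> f 0 \<in> (\<lambda>g. emb_kt c * g) ` gen_subgroup (D_phi emb_kt a m)"
      then obtain c g where cg: "c \<noteq> 0" "g \<in> gen_subgroup (D_phi emb_kt a m)" "f 0 = emb_kt c * g"
        by blast
      show "cond2 a m f" unfolding cond2_def
      proof (intro allI impI)
        fix t y assume rv: "rat_map_value_at f t y"
        have gX': "in_X emb_kt a m (\<lambda>i. emb_kt (y i))" by (rule gX[OF rv])
        have y0: "y 0 \<noteq> 0"
        proof
          assume "y 0 = 0"
          then have "1 - qf_eval emb_kt a m (\<lambda>j. emb_kt (y (Suc (Suc j)))) = 0"
            using gX' unfolding inX_iff by simp
          then show False using ak1[OF an] by blast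
        qed
        have rv0: "rat_value_at (f 0) t (y 0)" using rv unfolding rat_map_value_at_def by blast
        have S: "f 0 / emb_kt (y 0) \<in> gen_subgroup (D_phi emb_kt a m)"
          by (rule spec[OF an cg(2) cg(1) cg(3) rv0 y0])
        have G: "emb_kt (y 0) / f 0 \<in> GG a m"
          using gen_sub_GG[OF an m1 gs_inv[OF S]] by simp
        have h1: "H a m f (N m (f 0))" by (rule toN[OF X f0nz])
        have "H a m (N m (f 0)) (N m (f 0 * (emb_kt (y 0) / f 0)))"
          using G f0nz unfolding GG_def by blast
        then have h2: "H a m (N m (f 0)) (N m (emb_kt (y 0)))" using f0nz by simp
        have h3: "H a m (\<lambda>i. emb_kt (y i)) (N m (emb_kt (y 0)))"
          using toN[OF gX'] y0 by simp
        show "H a m f (\<lambda>i. emb_kt (y i))"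
          using H_trans[OF H_trans[OF h1 h2] H_sym[OF h3]] .
      qed
    next
      assume c2: "cond2 a m f"
      obtain t y where rv: "rat_map_value_at f t y" using exists_value[OF fz] by blast
      have Hf: "H a m f (\<lambda>i. emb_kt (y i))" using c2 rv unfolding cond2_def by blast
      have S: "f 0 / emb_kt (y 0) \<in> gen_subgroup (D_phi emb_kt a m)"
        using chain_inv[OF an sym Hf f0nz] by simp
      have "emb_kt (y 0) \<noteq> 0"
      proof
        assume "emb_kt (y 0) = 0"
        then have "(0::'k poly fract) \<in> gen_subgroup (D_phi emb_kt a m)" using S by simp
        then show False using gs_nz[OF D_nz] by blast
      qed
      then have "y 0 \<noteq> 0" "f 0 = emb_kt (y 0) * (f 0 / emb_kt (y 0))" by auto
      then show "\<exists>c::'k. c \<noteq> 0 \<and> f 0 \<in> (\<lambda>g. emb_kt c * g) ` gen_subgroup (D_phi emb_kt a m)"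
        using S by blast
    qed
  }
  assume nan: "\<not> anisotropic_phi a m"
  obtain w where w: "qf_eval id a m w = 1" using iso_w0[OF nan reg sym] by blast
  define w0 where "w0 = (\<lambda>j. emb_kt (w j))"
  have w0: "qf_eval emb_kt a m w0 = 1"
  proof -
    have "qf_eval emb_kt a m w0 = emb_kt (qf_eval id a m w)" unfolding w0_def by (rule qf_hom) simp_all
    then show ?thesis using w by simp
  qed
  show "cond2 a m f" unfolding cond2_def
  proof (intro allI impI)
    fix t y assume rv: "rat_map_value_at f t y"
    have h1: "H a m f (pt m 0 0 w0)" by (rule iso_all[OF w0 X])
    have h2: "H a m (\<lambda>i. emb_kt (y i)) (pt m 0 0 w0)" by (rule iso_all[OF w0 gX[OF rv]])
    show "H a m f (\<lambda>i. emb_kt (y i))" by (rule H_trans[OF h1 H_sym[OF h2]])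
  qed
qed

end
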